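(* ${\bf K^\boxplus}$ is sound and strongly complete with respect to the class of serial bimodal frames (those in which both $R_1$ and $R_2$ are serial): for every $\Gamma\subseteq\mathcal{L}(\boxplus)$ and $\phi\in\mathcal{L}(\boxplus)$, $\Gamma\vdash_{{\bf K^\boxplus}}\phi$ iff $\phi$ is true at every state of every serial bimodal model at which all formulas of $\Gamma$ are true.
   Context: Fix a nonempty set $\mathbf{P}$ of propositional variables. A bimodal model is $\langle S,R_1,R_2,V\rangle$ with $S$ nonempty, $R_1,R_2\subseteq S\times S$, $V:\mathbf{P}\to\mathcal{P}(S)$. Write $R_i(s)=\{t\mid sR_it\}$. $\mathcal{L}(\boxplus):\ \phi::=p\mid\neg\phi\mid(\phi\wedge\phi)\mid\boxplus\phi$. Truth: $\mathcal{M},s\vDash\boxplus\phi$ iff ($\mathcal{M},t\vDash\phi$ for all $t\in R_1(s)$) or ($\mathcal{M},u\vDash\neg\phi$ for all $u\in R_2(s)$); atoms and Booleans as usual. ${\bf K^\boxplus}$ has axioms: all instances of propositional tautologies; CON: $\boxplus\phi\wedge\boxplus\psi\to\boxplus(\phi\wedge\psi)\wedge\boxplus(\phi\vee\psi)$; DIS: $\boxplus\phi\to\boxplus(\phi\vee\psi)\vee\boxplus(\phi\wedge\chi)$; and rules: modus ponens; RN: from $\phi$ infer $\boxplus\phi\wedge\boxplus\neg\phi$; RE: from $\phi\leftrightarrow\psi$ infer $\boxplus\phi\leftrightarrow\boxplus\psi$. *)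

theory Defs
  imports Main
begin

datatype 'p fm = Atom 'p | Neg "'p fm" | Con "'p fm" "'p fm" | Bplus "'p fm"

definition Dis :: "'p fm \<Rightarrow> 'p fm \<Rightarrow> 'p fm" where
  "Dis a b = Neg (Con (Neg a) (Neg b))"
definition Imp :: "'p fm \<Rightarrow> 'p fm \<Rightarrow> 'p fm" where
  "Imp a b = Neg (Con a (Neg b))"
definition Iff :: "'p fm \<Rightarrow> 'p fm \<Rightarrow> 'p fm" where
  "Iff a b = Con (Imp a b) (Imp b a)"

fun tv :: "('p fm \<Rightarrow> bool) \<Rightarrow> 'p fm \<Rightarrow> bool" where
  "tv v (Atom p) = v (Atom p)"
| "tv v (Neg a) = (\<not> tv v a)"
| "tv v (Con a b) = (tv v a \<and> tv v b)"
| "tv v (Bplus a) = v (Bplus a)"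

definition tautology :: "'p fm \<Rightarrow> bool" where
  "tautology a \<longleftrightarrow> (\<forall>v. tv v a)"

inductive Kthm :: "'p fm \<Rightarrow> bool" where
  TAUT: "tautology a \<Longrightarrow> Kthm a"
| CON: "Kthm (Imp (Con (Bplus a) (Bplus b)) (Con (Bplus (Con a b)) (Bplus (Dis a b))))"
| DIS: "Kthm (Imp (Bplus a) (Dis (Bplus (Dis a b)) (Bplus (Con a c))))"
| MP: "Kthm (Imp a b) \<Longrightarrow> Kthm a \<Longrightarrow> Kthm b"
| RN: "Kthm a \<Longrightarrow> Kthm (Con (Bplus a) (Bplus (Neg a)))"
| RE: "Kthm (Iff a b) \<Longrightarrow> Kthm (Iff (Bplus a) (Bplus b))"

fun imps :: "'p fm list \<Rightarrow> 'p fm \<Rightarrow> 'p fm" where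
  "imps [] b = b"
| "imps (a # as) b = Imp a (imps as b)"

definition derives :: "'p fm set \<Rightarrow> 'p fm \<Rightarrow> bool" where
  "derives G a \<longleftrightarrow> (\<exists>as. set as \<subseteq> G \<and> Kthm (imps as a))"

type_synonym ('s, 'p) model = "'s set \<times> ('s \<times> 's) set \<times> ('s \<times> 's) set \<times> ('p \<Rightarrow> 's set)"

definition serial_model :: "('s, 'p) model \<Rightarrow> bool" where
  "serial_model M \<longleftrightarrow> (case M of (S, R1, R2, V) \<Rightarrow>
     S \<noteq> {} \<and> R1 \<subseteq> S \<times> S \<and> R2 \<subseteq> S \<times> S \<and> (\<forall>p. V p \<subseteq> S) \<and>
     (\<forall>s\<in>S. \<exists>t. (s, t) \<in> R1) \<and> (\<forall>s\<in>S. \<exists>t. (s, t) \<in> R2))"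

fun sat :: "('s, 'p) model \<Rightarrow> 's \<Rightarrow> 'p fm \<Rightarrow> bool" where
  "sat M s (Atom p) = (s \<in> snd (snd (snd M)) p)"
| "sat M s (Neg a) = (\<not> sat M s a)"
| "sat M s (Con a b) = (sat M s a \<and> sat M s b)"
| "sat M s (Bplus a) =
     ((\<forall>t. (s, t) \<in> fst (snd M) \<longrightarrow> sat M t a) \<or>
      (\<forall>u. (s, u) \<in> fst (snd (snd M)) \<longrightarrow> \<not> sat M u a))"

definition serial_conseq :: "'s itself \<Rightarrow> 'p fm set \<Rightarrow> 'p fm \<Rightarrow> bool" where
  "serial_conseq _ G a \<longleftrightarrow>
     (\<forall>M :: ('s, 'p) model. serial_model M \<longrightarrow>
        (\<forall>s \<in> fst M. (\<forall>b\<in>G. sat M s b) \<longrightarrow> sat M s a))"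

end

theory Submission imports Defs begin


lemma tv_Imp[simp]: "tv v (Imp a b) = (tv v a \<longrightarrow> tv v b)" by (simp add: Imp_def)
lemma tv_Dis[simp]: "tv v (Dis a b) = (tv v a \<or> tv v b)" by (simp add: Dis_def)
lemma tv_Iff[simp]: "tv v (Iff a b) = (tv v a = tv v b)" by (auto simp add: Iff_def)
lemma tv_imps[simp]: "tv v (imps as b) = ((\<forall>x\<in>set as. tv v x) \<longrightarrow> tv v b)"
  by (induction as) auto

lemma sat_Imp[simp]: "sat M s (Imp a b) = (sat M s a \<longrightarrow> sat M s b)" by (simp add: Imp_def)
lemma sat_Dis[simp]: "sat M s (Dis a b) = (sat M s a \<or> sat M s b)" by (simp add: Dis_def)
lemma sat_Iff[simp]: "sat M s (Iff a b) = (sat M s a = sat M s b)" by (auto simp add: Iff_def)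
lemma sat_imps[simp]: "sat M s (imps as b) = ((\<forall>x\<in>set as. sat M s x) \<longrightarrow> sat M s b)"
  by (induction as) auto

lemma tv_sat: "tv (sat M s) a = sat M s a"
  by (induction a) auto

lemma sound: "Kthm a \<Longrightarrow> sat M s a"
proof (induction arbitrary: s rule: Kthm.induct)
  case (TAUT a)
  then show ?case using tv_sat[of M s a] by (simp add: tautology_def)
next
  case (CON a b) then show ?case by auto
next
  case (DIS a b c) then show ?case by auto
next
  case (RE a b) then show ?case by simp
qed auto

lemma Kthm_imps_mp: "Kthm (imps xs c) \<Longrightarrow> \<forall>x\<in>set xs. Kthm x \<Longrightarrow> Kthm c"
proof (induction xs)
  case (Cons x xs)
  have "Kthm (imps xs c)" using MP[of x "imps xs c"] Cons.prems by simp
  then show ?case using Cons.IH Cons.prems by simp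
qed simp

lemma Kthm_taut: "\<forall>x\<in>set xs. Kthm x \<Longrightarrow> tautology (imps xs c) \<Longrightarrow> Kthm c"
  using TAUT Kthm_imps_mp by blast

lemma taut0: "(\<And>v. tv v x) \<Longrightarrow> Kthm x"
  by (rule TAUT) (simp add: tautology_def)
lemma taut1: "Kthm x \<Longrightarrow> (\<And>v. tv v x \<Longrightarrow> tv v y) \<Longrightarrow> Kthm y"
  using Kthm_taut[of "[x]" y] by (simp add: tautology_def)

lemma derives_combine:
  assumes "\<forall>b\<in>set bs. derives G b" and "\<And>v. (\<forall>b\<in>set bs. tv v b) \<Longrightarrow> tv v c"
  shows "derives G c"
proof -
  from assms(1) obtain f where f: "\<forall>b\<in>set bs. set (f b) \<subseteq> G \<and> Kthm (imps (f b) b)"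
    using bchoice[OF assms(1)[unfolded derives_def]] by blast
  define as where "as = concat (map f bs)"
  have kb: "\<forall>b\<in>set bs. Kthm (imps as b)"
  proof
    fix b assume b: "b \<in> set bs"
    have sub: "set (f b) \<subseteq> set as" using b by (auto simp: as_def)
    have k: "Kthm (imps (f b) b)" using f b by blast
    show "Kthm (imps as b)" using k
    proof (rule taut1)
      fix v assume "tv v (imps (f b) b)" then show "tv v (imps as b)" using sub by auto
    qed
  qed
  have "Kthm (imps as c)"
  proof (rule Kthm_taut[of "map (imps as) bs"])
    show "\<forall>x\<in>set (map (imps as) bs). Kthm x" using kb by simp
    show "tautology (imps (map (imps as) bs) (imps as c))" unfolding tautology_def
    proof
      fix v show "tv v (imps (map (imps as) bs) (imps as c))" using assms(2)[of v] by auto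
    qed
  qed
  moreover have "set as \<subseteq> G" using f by (auto simp: as_def)
  ultimately show ?thesis unfolding derives_def by blast
qed

lemma derives_assm: "a \<in> G \<Longrightarrow> derives G a"
  unfolding derives_def by (intro exI[of _ "[a]"]) (auto intro: taut0)

lemma thm_derives: "Kthm a \<Longrightarrow> derives G a"
  unfolding derives_def by (intro exI[of _ "[]"]) auto

lemma deduction: "derives (insert b G) c \<Longrightarrow> derives G (Imp b c)"
proof -
  assume "derives (insert b G) c"
  then obtain as where as: "set as \<subseteq> insert b G" "Kthm (imps as c)" unfolding derives_def by blast
  define as' where "as' = filter (\<lambda>x. x \<noteq> b) as"
  have "set as' \<subseteq> G" using as by (auto simp: as'_def)
  moreover have "Kthm (imps as' (Imp b c))"
    using as(2) by (rule taut1) (auto simp: as'_def)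
  ultimately show ?thesis unfolding derives_def by blast
qed

definition bot :: "'p fm" where "bot = Con (Atom undefined) (Neg (Atom undefined))"
lemma tv_bot[simp]: "tv v bot = False" by (simp add: bot_def)
lemma sat_bot[simp]: "sat M s bot = False" by (simp add: bot_def)

definition consistent :: "'p fm set \<Rightarrow> bool" where "consistent G = (\<not> derives G bot)"
definition mcs :: "'p fm set \<Rightarrow> bool" where
  "mcs G = (consistent G \<and> (\<forall>H. G \<subseteq> H \<longrightarrow> consistent H \<longrightarrow> H = G))"

lemma mcs_der: assumes "mcs G" "derives G a" shows "a \<in> G"
proof -
  have "consistent (insert a G)"
  proof (rule ccontr)
    assume "\<not> consistent (insert a G)"
    then have "derives G (Imp a bot)" unfolding consistent_def by (auto intro: deduction)
    then have "derives G bot" using assms(2) by (intro derives_combine[of "[a, Imp a bot]"]) auto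
    then show False using assms(1) by (simp add: mcs_def consistent_def)
  qed
  then show ?thesis using assms(1) unfolding mcs_def by blast
qed

lemma mcs_taut: assumes "mcs G" "set bs \<subseteq> G" "\<And>v. (\<forall>b\<in>set bs. tv v b) \<Longrightarrow> tv v c"
  shows "c \<in> G"
proof -
  have "derives G c"
  proof (rule derives_combine[of bs])
    show "\<forall>b\<in>set bs. derives G b" using assms(2) derives_assm by blast
    show "\<And>v. (\<forall>b\<in>set bs. tv v b) \<Longrightarrow> tv v c" by (rule assms(3))
  qed
  then show ?thesis by (rule mcs_der[OF assms(1)])
qed

lemma mcs_thm: "mcs G \<Longrightarrow> Kthm a \<Longrightarrow> a \<in> G"
  using mcs_der thm_derives by blast

lemma mcs_bot: assumes "mcs G" shows "bot \<notin> G"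
proof
  assume "bot \<in> G" then have "derives G bot" by (rule derives_assm)
  then show False using assms unfolding mcs_def consistent_def by blast
qed

lemma mcs_neg: assumes "mcs G" shows "(Neg a \<in> G) = (a \<notin> G)"
proof
  assume n: "Neg a \<in> G" show "a \<notin> G"
  proof
    assume "a \<in> G"
    then have "bot \<in> G" using n by (intro mcs_taut[OF assms, of "[a, Neg a]"]) simp_all
    then show False using mcs_bot[OF assms] by blast
  qed
next
  assume "a \<notin> G"
  then have "\<not> consistent (insert a G)" using assms unfolding mcs_def by blast
  then have "derives G (Imp a bot)" unfolding consistent_def by (auto intro: deduction)
  then have "derives G (Neg a)" by (intro derives_combine[of "[Imp a bot]"]) simp_all
  then show "Neg a \<in> G" by (rule mcs_der[OF assms])
qed

lemma mcs_con: assumes G: "mcs G" shows "(Con a b \<in> G) = (a \<in> G \<and> b \<in> G)"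
proof
  assume h: "Con a b \<in> G"
  have "a \<in> G" by (rule mcs_taut[OF G, of "[Con a b]"]) (simp_all add: h)
  moreover have "b \<in> G" by (rule mcs_taut[OF G, of "[Con a b]"]) (simp_all add: h)
  ultimately show "a \<in> G \<and> b \<in> G" by blast
next
  assume h: "a \<in> G \<and> b \<in> G"
  show "Con a b \<in> G" by (rule mcs_taut[OF G, of "[a, b]"]) (simp_all add: h)
qed

lemma mcs_equiv: assumes G: "mcs G" and k: "Kthm (Iff x y)" and x: "Bplus x \<in> G"
  shows "Bplus y \<in> G"
proof -
  have "Iff (Bplus x) (Bplus y) \<in> G" by (rule mcs_thm[OF G RE[OF k]])
  then show ?thesis by (intro mcs_taut[OF G, of "[Iff (Bplus x) (Bplus y), Bplus x]"]) (auto simp add: x)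
qed

lemma mcs_equiv': assumes G: "mcs G" and e: "\<And>v. tv v x = tv v y" and x: "Bplus x \<in> G"
  shows "Bplus y \<in> G"
proof -
  have "Kthm (Iff x y)" by (rule taut0) (simp add: e)
  then show ?thesis using mcs_equiv[OF G _ x] by blast
qed



definition Fs :: "'p fm set \<Rightarrow> 'p fm set" where "Fs G = {a. \<forall>p. Bplus (Dis a p) \<in> G}"
definition Is :: "'p fm set \<Rightarrow> 'p fm set" where "Is G = {a. \<forall>p. Bplus (Con a p) \<in> G}"

context fixes G :: "'p fm set" assumes G: "mcs G"
begin

lemma F_up: "x \<in> Fs G \<Longrightarrow> Kthm (Imp x y) \<Longrightarrow> y \<in> Fs G"
  unfolding Fs_def
proof (safe)
  fix p assume x: "\<forall>p. Bplus (Dis x p) \<in> G" and k: "Kthm (Imp x y)"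
  have "Kthm (Iff (Dis x (Dis y p)) (Dis y p))" using k by (rule taut1) auto
  then show "Bplus (Dis y p) \<in> G" using x G mcs_equiv by blast
qed

lemma F_con: "x \<in> Fs G \<Longrightarrow> y \<in> Fs G \<Longrightarrow> Con x y \<in> Fs G"
  unfolding Fs_def
proof (safe)
  fix p assume x: "\<forall>p. Bplus (Dis x p) \<in> G" and y: "\<forall>p. Bplus (Dis y p) \<in> G"
  have "Bplus (Con (Dis x p) (Dis y p)) \<in> G"
    using mcs_thm[OF G CON[of "Dis x p" "Dis y p"]] x y
    by (intro mcs_taut[OF G, of "[_, Bplus (Dis x p), Bplus (Dis y p)]"]) auto
  then show "Bplus (Dis (Con x y) p) \<in> G" by (rule mcs_equiv'[OF G, rotated]) auto
qed

lemma F_thm: "Kthm x \<Longrightarrow> x \<in> Fs G"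
  unfolding Fs_def
proof (safe)
  fix p assume "Kthm x"
  then have "Kthm (Dis x p)" by (rule taut1) auto
  then show "Bplus (Dis x p) \<in> G" using RN mcs_thm[OF G] mcs_con[OF G] by blast
qed

lemma F_closed: "set as \<subseteq> Fs G \<Longrightarrow> Kthm (imps as a) \<Longrightarrow> a \<in> Fs G"
proof (induction as arbitrary: a)
  case Nil then show ?case using F_thm by simp
next
  case (Cons b as)
  have "Kthm (imps as (Imp b a))" using Cons.prems(2) by (rule taut1) auto
  then have "Imp b a \<in> Fs G" using Cons by auto
  then have "Con b (Imp b a) \<in> Fs G" using Cons.prems(1) F_con by auto
  then show ?case by (rule F_up) (rule taut0, auto)
qed

lemma I_down: "x \<in> Is G \<Longrightarrow> Kthm (Imp y x) \<Longrightarrow> y \<in> Is G"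
  unfolding Is_def
proof (safe)
  fix p assume x: "\<forall>p. Bplus (Con x p) \<in> G" and k: "Kthm (Imp y x)"
  have "Kthm (Iff (Con x (Con y p)) (Con y p))" using k by (rule taut1) auto
  then show "Bplus (Con y p) \<in> G" using x G mcs_equiv by blast
qed

lemma I_dis: "x \<in> Is G \<Longrightarrow> y \<in> Is G \<Longrightarrow> Dis x y \<in> Is G"
  unfolding Is_def
proof (safe)
  fix p assume x: "\<forall>p. Bplus (Con x p) \<in> G" and y: "\<forall>p. Bplus (Con y p) \<in> G"
  have "Bplus (Dis (Con x p) (Con y p)) \<in> G"
    using mcs_thm[OF G CON[of "Con x p" "Con y p"]] x y
    by (intro mcs_taut[OF G, of "[_, Bplus (Con x p), Bplus (Con y p)]"]) auto
  then show "Bplus (Con (Dis x y) p) \<in> G" by (rule mcs_equiv'[OF G, rotated]) auto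
qed

lemma I_bot: "bot \<in> Is G"
  unfolding Is_def
proof (safe)
  fix p :: "'p fm"
  have "Kthm (Neg (Con bot p))" by (rule taut0) simp
  then have "Bplus (Neg (Neg (Con bot p))) \<in> G" using RN mcs_thm[OF G] mcs_con[OF G] by blast
  then show "Bplus (Con bot p) \<in> G" by (rule mcs_equiv'[OF G, rotated]) auto
qed

lemma I_closed: "set is \<subseteq> Is G \<Longrightarrow> Kthm (imps (map Neg is) (Neg a)) \<Longrightarrow> a \<in> Is G"
proof (induction "is" arbitrary: a)
  case Nil
  then have "Kthm (Neg a)" by simp
  then have "Kthm (Imp a bot)" by (rule taut1) simp
  then show ?case using I_bot I_down by blast
next
  case (Cons i "is")
  have "Kthm (imps (map Neg is) (Neg (Con a (Neg i))))" using Cons.prems(2) by (rule taut1) auto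
  then have "Con a (Neg i) \<in> Is G" using Cons by auto
  then have "Dis (Con a (Neg i)) i \<in> Is G" using Cons.prems(1) I_dis by auto
  then show ?case by (rule I_down) (rule taut0, auto)
qed

lemma B_split: assumes "Bplus a \<in> G" shows "a \<in> Fs G \<or> a \<in> Is G"
proof (rule ccontr)
  assume "\<not> ?thesis"
  then obtain p q where p: "Bplus (Dis a p) \<notin> G" and q: "Bplus (Con a q) \<notin> G"
    unfolding Fs_def Is_def by blast
  have "Neg (Bplus (Dis a p)) \<in> G" "Neg (Bplus (Con a q)) \<in> G" using p q mcs_neg[OF G] by auto
  moreover have "Imp (Bplus a) (Dis (Bplus (Dis a p)) (Bplus (Con a q))) \<in> G"
    using mcs_thm[OF G DIS] by blast
  ultimately have "bot \<in> G" using assms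
    by (intro mcs_taut[OF G, of "[Imp (Bplus a) (Dis (Bplus (Dis a p)) (Bplus (Con a q))),
      Bplus a, Neg (Bplus (Dis a p)), Neg (Bplus (Con a q))]"]) auto
  then show False using mcs_bot[OF G] by blast
qed

lemma F_B: "a \<in> Fs G \<Longrightarrow> Bplus a \<in> G"
  unfolding Fs_def by (auto intro: mcs_equiv'[OF G, of "Dis a a"])

lemma I_B: "a \<in> Is G \<Longrightarrow> Bplus a \<in> G"
  unfolding Is_def by (auto intro: mcs_equiv'[OF G, of "Con a a"])

end



lemma lindenbaum: assumes "consistent H" shows "\<exists>G. H \<subseteq> G \<and> mcs G"
proof -
  let ?A = "{D. H \<subseteq> D \<and> consistent D}"
  have "\<forall>C\<in>chains ?A. \<exists>U\<in>?A. \<forall>X\<in>C. X \<subseteq> U"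
  proof
    fix C assume C: "C \<in> chains ?A"
    show "\<exists>U\<in>?A. \<forall>X\<in>C. X \<subseteq> U"
    proof (cases "C = {}")
      case True then show ?thesis using assms by auto
    next
      case False
      have "consistent (\<Union>C)" unfolding consistent_def derives_def
      proof
        assume "\<exists>as. set as \<subseteq> \<Union>C \<and> Kthm (imps as bot)"
        then obtain as where as: "set as \<subseteq> \<Union>C" "Kthm (imps as bot)" by blast
        have ch: "subset.chain ?A C" using C by (simp add: chains_alt_def)
        obtain B where "B \<in> C" "set as \<subseteq> B"
          using finite_subset_Union_chain[OF _ as(1) False ch] by blast
        then have "derives B bot" using as(2) unfolding derives_def by blast
        then show False using \<open>B \<in> C\<close> C unfolding chains_def consistent_def by blast
      qed
      moreover have "H \<subseteq> \<Union>C" using False C unfolding chains_def by blast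
      ultimately show ?thesis by blast
    qed
  qed
  then obtain M where "M \<in> ?A" "\<forall>X\<in>?A. M \<subseteq> X \<longrightarrow> X = M" using Zorn_Lemma2[of ?A] by blast
  then show ?thesis unfolding mcs_def by blast
qed

lemma map_image: "set as \<subseteq> f ` A \<Longrightarrow> \<exists>bs. as = map f bs \<and> set bs \<subseteq> A"
proof (induction as)
  case Nil then show ?case by auto
next
  case (Cons x as)
  then obtain b where "b \<in> A" "x = f b" by auto
  moreover obtain bs where "as = map f bs" "set bs \<subseteq> A" using Cons by auto
  ultimately show ?case by (intro exI[of _ "b # bs"]) auto
qed

lemma witness: assumes G: "mcs G" and a: "Bplus a \<notin> G"
  shows "(\<exists>D. mcs D \<and> Fs G \<subseteq> D \<and> a \<notin> D) \<and> (\<exists>D. mcs D \<and> (\<forall>i\<in>Is G. i \<notin> D) \<and> a \<in> D)"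
proof
  have "consistent (insert (Neg a) (Fs G))"
  proof (rule ccontr)
    assume "\<not> consistent (insert (Neg a) (Fs G))"
    then have "derives (Fs G) (Imp (Neg a) bot)" unfolding consistent_def by (auto intro: deduction)
    then have "derives (Fs G) a" by (intro derives_combine[of "[Imp (Neg a) bot]"]) auto
    then have "a \<in> Fs G" unfolding derives_def using F_closed[OF G] by blast
    then show False using F_B[OF G] a by blast
  qed
  then obtain D where "insert (Neg a) (Fs G) \<subseteq> D" "mcs D" using lindenbaum by blast
  then show "\<exists>D. mcs D \<and> Fs G \<subseteq> D \<and> a \<notin> D" using mcs_neg by blast
next
  have "consistent (insert a (Neg ` Is G))"
  proof (rule ccontr)
    assume "\<not> consistent (insert a (Neg ` Is G))"
    then have "derives (Neg ` Is G) (Imp a bot)" unfolding consistent_def by (auto intro: deduction)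
    then have "derives (Neg ` Is G) (Neg a)" by (intro derives_combine[of "[Imp a bot]"]) auto
    then obtain as where as: "set as \<subseteq> Neg ` Is G" "Kthm (imps as (Neg a))" unfolding derives_def by blast
    then obtain iss where "as = map Neg iss" "set iss \<subseteq> Is G" using map_image by blast
    then have "a \<in> Is G" using as I_closed[OF G] by blast
    then show False using I_B[OF G] a by blast
  qed
  then obtain D where D: "insert a (Neg ` Is G) \<subseteq> D" "mcs D" using lindenbaum by blast
  then have "\<forall>i\<in>Is G. i \<notin> D" using mcs_neg[OF D(2)] by blast
  then show "\<exists>D. mcs D \<and> (\<forall>i\<in>Is G. i \<notin> D) \<and> a \<in> D" using D by blast
qed

lemma consistent_empty: "consistent {}"
  unfolding consistent_def derives_def
proof
  assume "\<exists>as. set as \<subseteq> {} \<and> Kthm (imps as (bot :: 'p fm))"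
  then have "Kthm (bot :: 'p fm)" by auto
  then have "sat (({()}, {}, {}, \<lambda>p. {}) :: (unit, 'p) model) () bot" by (rule sound)
  then show False by simp
qed

definition D0 :: "'p fm set" where "D0 = (SOME D. mcs D)"
lemma mcs_D0: "mcs D0"
  unfolding D0_def using lindenbaum[OF consistent_empty] by (metis someI)

definition full :: "'p fm set \<Rightarrow> bool" where "full G = (\<forall>a. Bplus a \<in> G)"

definition canon :: "('p fm set, 'p) model" where
  "canon = ({G. mcs G},
    {(G, D). mcs G \<and> mcs D \<and> (if full G then D = D0 else Fs G \<subseteq> D)},
    {(G, D). mcs G \<and> mcs D \<and> (if full G then D = D0 else (\<forall>i\<in>Is G. i \<notin> D))},
    \<lambda>p. {G. mcs G \<and> Atom p \<in> G})"

lemma canon_R1: "(G, t) \<in> fst (snd canon) = (mcs G \<and> mcs t \<and> (if full G then t = D0 else Fs G \<subseteq> t))"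
  by (simp add: canon_def)
lemma canon_R2: "(G, t) \<in> fst (snd (snd canon)) = (mcs G \<and> mcs t \<and> (if full G then t = D0 else (\<forall>i\<in>Is G. i \<notin> t)))"
  by (simp add: canon_def)

lemma truth: "mcs G \<Longrightarrow> sat canon G a = (a \<in> G)"
proof (induction a arbitrary: G)
  case (Atom p) then show ?case by (simp add: canon_def)
next
  case (Neg a) then show ?case using mcs_neg[OF Neg.prems, of a] by simp
next
  case (Con a b) then show ?case using mcs_con[OF Con.prems, of a b] by simp
next
  case (Bplus a)
  have eq0: "sat canon G (Bplus a) =
     ((\<forall>t. (G, t) \<in> fst (snd canon) \<longrightarrow> sat canon t a) \<or>
      (\<forall>u. (G, u) \<in> fst (snd (snd canon)) \<longrightarrow> \<not> sat canon u a))" by simp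
  show ?case
  proof (cases "full G")
    case True
    then have "Bplus a \<in> G" unfolding full_def by blast
    moreover have "sat canon G (Bplus a)"
    proof (cases "a \<in> D0")
      case True
      then have "\<forall>t. (G, t) \<in> fst (snd canon) \<longrightarrow> sat canon t a"
        using \<open>full G\<close> Bplus.IH mcs_D0 by (simp add: canon_R1)
      then show ?thesis using eq0 by blast
    next
      case False
      then have "\<forall>t. (G, t) \<in> fst (snd (snd canon)) \<longrightarrow> \<not> sat canon t a"
        using \<open>full G\<close> Bplus.IH mcs_D0 by (simp add: canon_R2)
      then show ?thesis using eq0 by blast
    qed
    ultimately show ?thesis by blast
  next
    case False
    have eq: "sat canon G (Bplus a) =
      ((\<forall>t. mcs t \<and> Fs G \<subseteq> t \<longrightarrow> a \<in> t) \<or> (\<forall>u. mcs u \<and> (\<forall>i\<in>Is G. i \<notin> u) \<longrightarrow> a \<notin> u))"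
    proof -
      have 1: "(\<forall>t. (G, t) \<in> fst (snd canon) \<longrightarrow> sat canon t a) = (\<forall>t. mcs t \<and> Fs G \<subseteq> t \<longrightarrow> a \<in> t)"
        using False Bplus.IH Bplus.prems by (auto simp add: canon_R1)
      have 2: "(\<forall>u. (G, u) \<in> fst (snd (snd canon)) \<longrightarrow> \<not> sat canon u a) = (\<forall>u. mcs u \<and> (\<forall>i\<in>Is G. i \<notin> u) \<longrightarrow> a \<notin> u)"
        using False Bplus.IH Bplus.prems by (auto simp add: canon_R2)
      show ?thesis using eq0 1 2 by simp
    qed
    show ?thesis
    proof
      assume "Bplus a \<in> G"
      then have "a \<in> Fs G \<or> a \<in> Is G" using B_split[OF Bplus.prems] by blast
      then show "sat canon G (Bplus a)" unfolding eq by blast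
    next
      assume s: "sat canon G (Bplus a)"
      show "Bplus a \<in> G"
      proof (rule ccontr)
        assume "Bplus a \<notin> G"
        from witness[OF Bplus.prems this] obtain D1 D2 where
          "mcs D1" "Fs G \<subseteq> D1" "a \<notin> D1" "mcs D2" "\<forall>i\<in>Is G. i \<notin> D2" "a \<in> D2" by blast
        then show False using s unfolding eq by blast
      qed
    qed
  qed
qed

lemma canon_serial: "serial_model canon"
proof -
  have R: "(\<exists>t. mcs t \<and> (if full G then t = D0 else Fs G \<subseteq> t)) \<and>
          (\<exists>t. mcs t \<and> (if full G then t = D0 else (\<forall>i\<in>Is G. i \<notin> t)))" if G: "mcs G" for G
  proof (cases "full G")
    case True then show ?thesis using mcs_D0 by auto
  next
    case False
    then obtain a where "Bplus a \<notin> G" unfolding full_def by blast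
    from witness[OF G this] False show ?thesis by auto
  qed
  show ?thesis unfolding serial_model_def canon_def prod.case
    apply (intro conjI)
    subgoal using mcs_D0 by blast
    subgoal by blast
    subgoal by blast
    subgoal by blast
    subgoal using R by blast
    subgoal using R by blast
    done
qed

lemma soundness:
  fixes G :: "'p fm set" and a :: "'p fm"
  assumes "derives G a" shows "serial_conseq TYPE('s) G a"
  unfolding serial_conseq_def
proof (intro allI impI ballI)
  fix M :: "('s, 'p) model" and s
  assume h: "\<forall>b\<in>G. sat M s b"
  obtain as where as: "set as \<subseteq> G" "Kthm (imps as a)" using assms unfolding derives_def by blast
  have "sat M s (imps as a)" using as(2) by (rule sound)
  then show "sat M s a" using as(1) h by auto
qed

theorem theorem6:
  fixes G :: "'p fm set" and a :: "'p fm"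
  shows "(derives G a \<longrightarrow> serial_conseq TYPE('s) G a)
       \<and> (derives G a \<longleftrightarrow> serial_conseq TYPE('p fm set) G a)"
proof -
  have cmp: "serial_conseq TYPE('p fm set) G a \<longrightarrow> derives G a"
  proof (rule impI, rule ccontr)
    assume sc: "serial_conseq TYPE('p fm set) G a" and nd: "\<not> derives G a"
    have "consistent (insert (Neg a) G)"
    proof (rule ccontr)
      assume "\<not> consistent (insert (Neg a) G)"
      then have "derives G (Imp (Neg a) bot)" unfolding consistent_def by (auto intro: deduction)
      then have "derives G a" by (intro derives_combine[of "[Imp (Neg a) bot]"]) simp_all
      then show False using nd by blast
    qed
    then obtain D where D: "insert (Neg a) G \<subseteq> D" "mcs D" using lindenbaum by blast
    have "D \<in> fst canon" using D by (simp add: canon_def)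
    moreover have "\<forall>b\<in>G. sat canon D b" using D truth by blast
    ultimately have "sat canon D a" using sc canon_serial unfolding serial_conseq_def by blast
    then have "a \<in> D" using truth[OF D(2)] by blast
    then show False using D mcs_neg[OF D(2)] by blast
  qed
  have "derives G a \<longrightarrow> serial_conseq TYPE('s) G a" using soundness by blast
  moreover have "derives G a \<longrightarrow> serial_conseq TYPE('p fm set) G a" using soundness by blast
  ultimately show ?thesis using cmp by blast
qed

end
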